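(* There are continuum many pairwise-incomparable (with respect to inclusion) modal clones with respect to $\mathbf{K}$. Consequently, not every modal clone with respect to $\mathbf{K}$ is finitely generated.
   Context: Modal formulas: $\phi::=x\mid\neg\phi\mid\phi\land\psi\mid\phi\lor\psi\mid\Diamond\phi\mid\Box\phi$ over a countably infinite set of variables. $\mathbf{K}$ is the minimal normal modal logic. The Lindenbaum–Tarski algebra of $\mathbf{K}$ has universe $A_{\mathbf{K}}=\{[\phi]\mid\phi \text{ a modal formula}\}$ where $[\phi]$ is the class of formulas $\psi$ with $\mathbf{K}\vdash\phi\leftrightarrow\psi$, with operations $\land,\lor,\neg,\top,\bot,\Diamond$ induced by the connectives. A clone over a set $A$ is a set of finitary operations $A^n\to A$ ($n\ge1$) containing all projections and closed under composition; the clone generated by a set of operations is the smallest clone containing it (constants being treated as constant unary operations). A modal clone with respect to $\mathbf{K}$ is any clone over $A_{\mathbf{K}}$ contained in the clone generated by the operations of the Lindenbaum–Tarski algebra of $\mathbf{K}$. A clone is finitely generated if it is the clone generated by a finite set of operations. *)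

theory Defs
  imports Main "HOL-Library.FuncSet" "HOL-Library.Equipollence"
begin

datatype form = Var nat | Neg form | And form form | Or form form | Dia form | Box form

definition Imp :: "form \<Rightarrow> form \<Rightarrow> form" where
  "Imp a b = Or (Neg a) b"

definition Iff :: "form \<Rightarrow> form \<Rightarrow> form" where
  "Iff a b = And (Imp a b) (Imp b a)"

definition Top :: form where "Top = Or (Var 0) (Neg (Var 0))"
definition Bot :: form where "Bot = And (Var 0) (Neg (Var 0))"

text \<open>Propositional evaluation, treating modal subformulas as atoms.\<close>
fun peval :: "(form \<Rightarrow> bool) \<Rightarrow> form \<Rightarrow> bool" where
  "peval v (Var n) = v (Var n)"
| "peval v (Neg a) = (\<not> peval v a)"
| "peval v (And a b) = (peval v a \<and> peval v b)"
| "peval v (Or a b) = (peval v a \<or> peval v b)"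
| "peval v (Dia a) = v (Dia a)"
| "peval v (Box a) = v (Box a)"

definition taut :: "form \<Rightarrow> bool" where
  "taut \<phi> \<longleftrightarrow> (\<forall>v. peval v \<phi>)"

text \<open>The minimal normal modal logic K (Hilbert style; axioms schematic,
  hence closed under uniform substitution).\<close>
inductive Kprov :: "form \<Rightarrow> bool" where
  taut: "taut \<phi> \<Longrightarrow> Kprov \<phi>"
| axK: "Kprov (Imp (Box (Imp \<phi> \<psi>)) (Imp (Box \<phi>) (Box \<psi>)))"
| dual: "Kprov (Iff (Dia \<phi>) (Neg (Box (Neg \<phi>))))"
| mp: "Kprov (Imp \<phi> \<psi>) \<Longrightarrow> Kprov \<phi> \<Longrightarrow> Kprov \<psi>"
| nec: "Kprov \<phi> \<Longrightarrow> Kprov (Box \<phi>)"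

definition kclass :: "form \<Rightarrow> form set" where
  "kclass \<phi> = {\<psi>. Kprov (Iff \<phi> \<psi>)}"

definition A_K :: "form set set" where
  "A_K = range kclass"

definition rep :: "form set \<Rightarrow> form" where
  "rep X = (SOME \<phi>. X = kclass \<phi>)"

text \<open>An n-ary operation on A is represented as a pair (n, f) with
  f an extensional function from A^n (tuples indexed by {..<n}) to A.\<close>
type_synonym 'a op = "nat \<times> ((nat \<Rightarrow> 'a) \<Rightarrow> 'a)"

definition tuples :: "'a set \<Rightarrow> nat \<Rightarrow> (nat \<Rightarrow> 'a) set" where
  "tuples A n = (\<Pi>\<^sub>E i\<in>{..<n}. A)"

definition ops :: "'a set \<Rightarrow> 'a op set" where
  "ops A = {(n, f). n \<ge> 1 \<and> f \<in> tuples A n \<rightarrow>\<^sub>E A}"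

definition mk_op :: "'a set \<Rightarrow> nat \<Rightarrow> ((nat \<Rightarrow> 'a) \<Rightarrow> 'a) \<Rightarrow> 'a op" where
  "mk_op A n f = (n, restrict f (tuples A n))"

definition proj :: "'a set \<Rightarrow> nat \<Rightarrow> nat \<Rightarrow> 'a op" where
  "proj A n i = mk_op A n (\<lambda>x. x i)"

definition comp_op :: "'a set \<Rightarrow> nat \<Rightarrow> 'a op \<Rightarrow> (nat \<Rightarrow> 'a op) \<Rightarrow> 'a op" where
  "comp_op A m F G = mk_op A m (\<lambda>x. snd F (restrict (\<lambda>i. snd (G i) x) {..<fst F}))"

definition is_clone :: "'a set \<Rightarrow> 'a op set \<Rightarrow> bool" where
  "is_clone A C \<longleftrightarrow>
     C \<subseteq> ops A
   \<and> (\<forall>n i. 1 \<le> n \<and> i < n \<longrightarrow> proj A n i \<in> C)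
   \<and> (\<forall>F G m. F \<in> C \<and> m \<ge> 1 \<and> (\<forall>i < fst F. G i \<in> C \<and> fst (G i) = m)
        \<longrightarrow> comp_op A m F G \<in> C)"

definition gen_clone :: "'a set \<Rightarrow> 'a op set \<Rightarrow> 'a op set" where
  "gen_clone A F = \<Inter>{C. is_clone A C \<and> F \<subseteq> C}"

definition finitely_generated :: "'a set \<Rightarrow> 'a op set \<Rightarrow> bool" where
  "finitely_generated A C \<longleftrightarrow> (\<exists>F. finite F \<and> F \<subseteq> ops A \<and> C = gen_clone A F)"

text \<open>Constants are treated as constant unary operations.\<close>
definition const_op :: "'a set \<Rightarrow> 'a \<Rightarrow> 'a op" where
  "const_op A c = mk_op A 1 (\<lambda>_. c)"

definition LT_ops :: "form set op set" where
  "LT_ops = {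
     mk_op A_K 2 (\<lambda>x. kclass (And (rep (x 0)) (rep (x 1)))),
     mk_op A_K 2 (\<lambda>x. kclass (Or (rep (x 0)) (rep (x 1)))),
     mk_op A_K 1 (\<lambda>x. kclass (Neg (rep (x 0)))),
     mk_op A_K 1 (\<lambda>x. kclass (Dia (rep (x 0)))),
     const_op A_K (kclass Top),
     const_op A_K (kclass Bot)}"

definition modal_clone :: "form set op set \<Rightarrow> bool" where
  "modal_clone C \<longleftrightarrow> is_clone A_K C \<and> C \<subseteq> gen_clone A_K LT_ops"

end

theory Submission
  imports Defs
begin

lemma tuples_restrict: "a \<in> A \<Longrightarrow> restrict (\<lambda>_. a) {..<n} \<in> tuples A n"
  by (simp add: tuples_def)

lemma fst_mk_op [simp]: "fst (mk_op A n f) = n"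
  by (simp add: mk_op_def)

lemma snd_mk_op: "x \<in> tuples A n \<Longrightarrow> snd (mk_op A n f) x = f x"
  by (simp add: mk_op_def)

lemma mk_op_in_ops: "1 \<le> n \<Longrightarrow> (\<And>x. x \<in> tuples A n \<Longrightarrow> f x \<in> A) \<Longrightarrow> mk_op A n f \<in> ops A"
  by (auto simp: mk_op_def ops_def)

lemma mk_op_cong: "(\<And>x. x \<in> tuples A n \<Longrightarrow> f x = g x) \<Longrightarrow> mk_op A n f = mk_op A n g"
  unfolding mk_op_def using restrict_ext by metis

lemma ops_mk: "g \<in> ops A \<Longrightarrow> mk_op A (fst g) (snd g) = g"
  by (auto simp: ops_def mk_op_def PiE_iff extensional_restrict)

lemma ops_val: "g \<in> ops A \<Longrightarrow> x \<in> tuples A (fst g) \<Longrightarrow> snd g x \<in> A"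
  by (auto simp: ops_def)

lemma ops_fst: "g \<in> ops A \<Longrightarrow> 1 \<le> fst g"
  by (auto simp: ops_def)

lemma comp_tuple: "(\<And>j. j < k \<Longrightarrow> G j \<in> ops A \<and> fst (G j) = m) \<Longrightarrow> x \<in> tuples A m
   \<Longrightarrow> restrict (\<lambda>j. snd (G j) x) {..<k} \<in> tuples A k"
proof -
  assume h: "\<And>j. j < k \<Longrightarrow> G j \<in> ops A \<and> fst (G j) = m" and x: "x \<in> tuples A m"
  have "snd (G j) x \<in> A" if "j < k" for j
    using h[OF that] x ops_val[of "G j" A x] by simp
  then show ?thesis unfolding tuples_def by (simp add: restrict_PiE_iff)
qed

lemma comp_in_ops: "F \<in> ops A \<Longrightarrow> 1 \<le> m \<Longrightarrow> (\<forall>i<fst F. G i \<in> ops A \<and> fst (G i) = m)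
   \<Longrightarrow> comp_op A m F G \<in> ops A"
  unfolding comp_op_def by (rule mk_op_in_ops) (auto intro!: ops_val comp_tuple)

lemma proj_in_ops: "1 \<le> n \<Longrightarrow> i < n \<Longrightarrow> proj A n i \<in> ops A"
  unfolding proj_def by (rule mk_op_in_ops) (auto simp: tuples_def)

lemma ops_clone: "is_clone A (ops A)"
  unfolding is_clone_def using proj_in_ops comp_in_ops by blast

lemma gen_clone_least: "is_clone A C \<Longrightarrow> F \<subseteq> C \<Longrightarrow> gen_clone A F \<subseteq> C"
  unfolding gen_clone_def by blast

lemma gen_clone_sub: "F \<subseteq> gen_clone A F"
  unfolding gen_clone_def by blast

lemma gen_clone_clone:
  assumes "F \<subseteq> ops A" shows "is_clone A (gen_clone A F)"
proof -
  have o: "ops A \<in> {C. is_clone A C \<and> F \<subseteq> C}" using assms ops_clone by blast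
  show ?thesis
    unfolding is_clone_def
  proof (intro conjI allI impI)
    show "gen_clone A F \<subseteq> ops A" using o unfolding gen_clone_def by blast
  next
    fix n i :: nat assume "1 \<le> n \<and> i < n"
    then show "proj A n i \<in> gen_clone A F" unfolding gen_clone_def is_clone_def by blast
  next
    fix F' G m assume h: "F' \<in> gen_clone A F \<and> 1 \<le> m \<and> (\<forall>i<fst F'. G i \<in> gen_clone A F \<and> fst (G i) = m)"
    show "comp_op A m F' G \<in> gen_clone A F"
      unfolding gen_clone_def
    proof
      fix C assume "C \<in> {C. is_clone A C \<and> F \<subseteq> C}"
      then have c: "is_clone A C" "F \<subseteq> C" by auto
      have "F' \<in> C" "\<forall>i<fst F'. G i \<in> C \<and> fst (G i) = m"
        using h c unfolding gen_clone_def by blast+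
      then show "comp_op A m F' G \<in> C" using c(1) h unfolding is_clone_def by blast
    qed
  qed
qed

lemma comp_proj:
  assumes "i < n" "\<forall>j<n. G j \<in> ops A \<and> fst (G j) = m"
  shows "comp_op A m (proj A n i) G = G i"
proof -
  have "comp_op A m (proj A n i) G = mk_op A m (snd (G i))"
    unfolding comp_op_def
  proof (rule mk_op_cong)
    fix x assume x: "x \<in> tuples A m"
    have "restrict (\<lambda>j. snd (G j) x) {..<n} \<in> tuples A n"
      using assms(2) x by (intro comp_tuple) auto
    then show "snd (proj A n i) (restrict (\<lambda>j. snd (G j) x) {..<fst (proj A n i)}) = snd (G i) x"
      using assms(1) by (simp add: proj_def snd_mk_op)
  qed
  also have "\<dots> = G i" using ops_mk[of "G i" A] assms by auto
  finally show ?thesis .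
qed

lemma comp_const:
  assumes "\<forall>j<n. G j \<in> ops A \<and> fst (G j) = m"
  shows "comp_op A m (mk_op A n (\<lambda>_. c)) G = mk_op A m (\<lambda>_. c)"
  unfolding comp_op_def
proof (rule mk_op_cong)
  fix x assume x: "x \<in> tuples A m"
  have "restrict (\<lambda>j. snd (G j) x) {..<n} \<in> tuples A n"
    using assms x by (intro comp_tuple) auto
  then show "snd (mk_op A n (\<lambda>_. c)) (restrict (\<lambda>j. snd (G j) x) {..<fst (mk_op A n (\<lambda>_. c))}) = c"
    by (simp add: snd_mk_op)
qed

definition cconst :: "'a set \<Rightarrow> 'a set \<Rightarrow> 'a op set" where
  "cconst A V = {proj A n i | n i. 1 \<le> n \<and> i < n} \<union> {mk_op A n (\<lambda>_. c) | n c. 1 \<le> n \<and> c \<in> V}"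

lemma cconst_projI: "1 \<le> n \<Longrightarrow> i < n \<Longrightarrow> proj A n i \<in> cconst A V"
  unfolding cconst_def by blast

lemma cconst_constI: "1 \<le> n \<Longrightarrow> c \<in> V \<Longrightarrow> mk_op A n (\<lambda>_. c) \<in> cconst A V"
  unfolding cconst_def by blast

lemma cconst_cases:
  assumes "f \<in> cconst A V"
  obtains n i where "f = proj A n i" "1 \<le> n" "i < n"
    | n c where "f = mk_op A n (\<lambda>_. c)" "1 \<le> n" "c \<in> V"
  using assms unfolding cconst_def by blast

lemma cconst_ops: "V \<subseteq> A \<Longrightarrow> cconst A V \<subseteq> ops A"
proof
  fix f assume V: "V \<subseteq> A" and f: "f \<in> cconst A V"
  from f show "f \<in> ops A"
  proof (cases rule: cconst_cases)
    case (1 n i) then show ?thesis using proj_in_ops by simp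
  next
    case (2 n c)
    have "mk_op A n (\<lambda>_. c) \<in> ops A" using 2 V by (intro mk_op_in_ops) auto
    then show ?thesis using 2 by simp
  qed
qed

lemma cconst_clone:
  assumes V: "V \<subseteq> A" shows "is_clone A (cconst A V)"
  unfolding is_clone_def
proof (intro conjI allI impI)
  show "cconst A V \<subseteq> ops A" using cconst_ops[OF V] .
next
  fix n i :: nat assume "1 \<le> n \<and> i < n" then show "proj A n i \<in> cconst A V"
    by (intro cconst_projI) auto
next
  fix F G m assume h: "F \<in> cconst A V \<and> 1 \<le> m \<and> (\<forall>i<fst F. G i \<in> cconst A V \<and> fst (G i) = m)"
  then have G: "\<forall>i<fst F. G i \<in> ops A \<and> fst (G i) = m" using cconst_ops[OF V] by blast
  from h have "F \<in> cconst A V" by blast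
  then show "comp_op A m F G \<in> cconst A V"
  proof (cases rule: cconst_cases)
    case (1 n i)
    then have n: "fst F = n" by (simp add: proj_def)
    then have "comp_op A m F G = G i" using comp_proj[of i n G A m] 1 G by simp
    moreover have "i < fst F" using 1 n by simp
    then have "G i \<in> cconst A V" using h by blast
    ultimately show ?thesis by simp
  next
    case (2 n c)
    then have "comp_op A m F G = mk_op A m (\<lambda>_. c)" using comp_const[of n G A m c] 2 G by simp
    then show ?thesis using 2 h cconst_constI[of m c V A] by simp
  qed
qed


section \<open>A Kripke model: worlds are naturals, w sees w - 1\<close>

fun sat :: "nat \<Rightarrow> form \<Rightarrow> bool" where
  "sat w (Var n) = False"
| "sat w (Neg a) = (\<not> sat w a)"
| "sat w (And a b) = (sat w a \<and> sat w b)"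
| "sat w (Or a b) = (sat w a \<or> sat w b)"
| "sat w (Dia a) = (0 < w \<and> sat (w - 1) a)"
| "sat w (Box a) = (0 < w \<longrightarrow> sat (w - 1) a)"

lemma peval_sat: "peval (sat w) \<phi> = sat w \<phi>"
  by (induction \<phi>) auto

lemma sound: "Kprov \<phi> \<Longrightarrow> sat w \<phi>"
proof (induction arbitrary: w rule: Kprov.induct)
  case (taut \<phi>)
  then show ?case using peval_sat unfolding taut_def by metis
qed (auto simp: Imp_def Iff_def)

lemma sound_iff: "Kprov (Iff a b) \<Longrightarrow> sat w a = sat w b"
  using sound[of "Iff a b" w] by (auto simp: Iff_def Imp_def)

lemma Kprov_refl: "Kprov (Iff a a)"
  by (rule Kprov.taut) (simp add: taut_def Iff_def Imp_def)

lemma rep_mem: "X \<in> A_K \<Longrightarrow> rep X \<in> X"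
proof -
  assume "X \<in> A_K"
  then obtain \<phi> where "X = kclass \<phi>" unfolding A_K_def by blast
  then have eq: "kclass (rep X) = X" unfolding rep_def by (metis (mono_tags) someI)
  have "rep X \<in> kclass (rep X)" using Kprov_refl by (simp add: kclass_def)
  then show ?thesis by (simp only: eq)
qed

primrec Xs :: "nat \<Rightarrow> form set" where
  "Xs 0 = kclass Top"
| "Xs (Suc i) = kclass (Dia (rep (Xs i)))"

lemma Xs_A: "Xs i \<in> A_K"
  by (cases i) (auto simp: A_K_def)

lemma sat_Xs: "sat w (rep (Xs i)) \<longleftrightarrow> i \<le> w"
proof (induction i arbitrary: w)
  case 0
  have "rep (Xs 0) \<in> kclass Top" using rep_mem[OF Xs_A[of 0]] by simp
  then have "Kprov (Iff Top (rep (Xs 0)))" by (simp add: kclass_def)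
  then have "sat w Top = sat w (rep (Xs 0))" by (rule sound_iff)
  then show ?case by (simp add: Top_def)
next
  case (Suc i)
  have "rep (Xs (Suc i)) \<in> kclass (Dia (rep (Xs i)))" using rep_mem[OF Xs_A[of "Suc i"]] by simp
  then have "Kprov (Iff (Dia (rep (Xs i))) (rep (Xs (Suc i))))" by (simp add: kclass_def)
  then have "sat w (Dia (rep (Xs i))) = sat w (rep (Xs (Suc i)))" by (rule sound_iff)
  then show ?case using Suc.IH[of "w - 1"] by auto
qed

lemma Xs_inj: "inj Xs"
proof (rule injI)
  fix i j assume eq: "Xs i = Xs j"
  have "sat i (rep (Xs i))" "sat j (rep (Xs j))" by (simp_all add: sat_Xs)
  then have "sat i (rep (Xs j))" "sat j (rep (Xs i))" using eq by simp_all
  then have "j \<le> i" "i \<le> j" by (simp_all add: sat_Xs)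
  then show "i = j" by simp
qed


section \<open>Clones generated by constants\<close>

lemma const_in_cconst:
  assumes "c \<in> A" "b \<in> A" "b \<noteq> c" "mk_op A 1 (\<lambda>_. c) \<in> cconst A V"
  shows "c \<in> V"
proof -
  define t where "t = restrict (\<lambda>_. b) {..<1::nat}"
  have t: "t \<in> tuples A 1" unfolding t_def using assms(2) by (rule tuples_restrict)
  from assms(4) consider n i where "mk_op A 1 (\<lambda>_. c) = proj A n i" "1 \<le> n" "i < n"
    | n c' where "mk_op A 1 (\<lambda>_. c) = mk_op A n (\<lambda>_. c')" "1 \<le> n" "c' \<in> V"
    unfolding cconst_def by blast
  then show ?thesis
  proof cases
    case 1
    then have "n = 1" by (metis fst_mk_op proj_def)
    with 1 have "i = 0" by simp
    have "snd (mk_op A 1 (\<lambda>_. c)) t = snd (proj A n i) t" using 1 by simp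
    then have "c = t 0" using t \<open>n = 1\<close> \<open>i = 0\<close> by (simp add: snd_mk_op proj_def)
    then show ?thesis using assms(3) by (simp add: t_def)
  next
    case 2
    then have "n = 1" by (metis fst_mk_op)
    have "snd (mk_op A 1 (\<lambda>_. c)) t = snd (mk_op A n (\<lambda>_. c')) t" using 2 by simp
    then have "c = c'" using t \<open>n = 1\<close> by (simp add: snd_mk_op)
    then show ?thesis using 2 by simp
  qed
qed

definition KC :: "nat set \<Rightarrow> form set op set" where
  "KC T = gen_clone A_K ((\<lambda>i. const_op A_K (Xs i)) ` T)"

lemma const_ops: "c \<in> A \<Longrightarrow> const_op A c \<in> ops A"
  unfolding const_op_def by (rule mk_op_in_ops) auto

lemma KC_clone: "is_clone A_K (KC T)"
  unfolding KC_def
proof (rule gen_clone_clone)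
  show "(\<lambda>i. const_op A_K (Xs i)) ` T \<subseteq> ops A_K"
  proof
    fix f assume "f \<in> (\<lambda>i. const_op A_K (Xs i)) ` T"
    then obtain i where "f = const_op A_K (Xs i)" by blast
    then show "f \<in> ops A_K" using const_ops[OF Xs_A[of i]] by simp
  qed
qed

lemma kclass_A: "kclass \<phi> \<in> A_K"
  by (simp add: A_K_def)

lemma LT_ops_ops: "LT_ops \<subseteq> ops A_K"
proof -
  have a: "mk_op A_K 2 (\<lambda>x. kclass (And (rep (x 0)) (rep (x 1)))) \<in> ops A_K"
    by (rule mk_op_in_ops) (simp_all add: kclass_A)
  have b: "mk_op A_K 2 (\<lambda>x. kclass (Or (rep (x 0)) (rep (x 1)))) \<in> ops A_K"
    by (rule mk_op_in_ops) (simp_all add: kclass_A)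
  have c: "mk_op A_K 1 (\<lambda>x. kclass (Neg (rep (x 0)))) \<in> ops A_K"
    by (rule mk_op_in_ops) (simp_all add: kclass_A)
  have d: "mk_op A_K 1 (\<lambda>x. kclass (Dia (rep (x 0)))) \<in> ops A_K"
    by (rule mk_op_in_ops) (simp_all add: kclass_A)
  have e: "const_op A_K (kclass Top) \<in> ops A_K" by (rule const_ops[OF kclass_A])
  have f: "const_op A_K (kclass Bot) \<in> ops A_K" by (rule const_ops[OF kclass_A])
  show ?thesis unfolding LT_ops_def using a b c d e f by blast
qed

lemma clone_comp: "is_clone A C \<Longrightarrow> F \<in> C \<Longrightarrow> 1 \<le> m
   \<Longrightarrow> (\<And>i. i < fst F \<Longrightarrow> G i \<in> C \<and> fst (G i) = m) \<Longrightarrow> comp_op A m F G \<in> C"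
  unfolding is_clone_def by blast

lemma LT_clone: "is_clone A_K (gen_clone A_K LT_ops)"
  by (rule gen_clone_clone[OF LT_ops_ops])

lemma Xs_LT: "const_op A_K (Xs i) \<in> gen_clone A_K LT_ops"
proof (induction i)
  case 0
  then show ?case using gen_clone_sub[of LT_ops A_K] unfolding LT_ops_def by auto
next
  case (Suc i)
  define D where "D = mk_op A_K 1 (\<lambda>x. kclass (Dia (rep (x 0))))"
  have D: "D \<in> gen_clone A_K LT_ops" using gen_clone_sub[of LT_ops A_K] unfolding LT_ops_def D_def by auto
  have "comp_op A_K 1 D (\<lambda>_. const_op A_K (Xs i)) \<in> gen_clone A_K LT_ops"
    by (rule clone_comp[OF LT_clone D]) (use Suc in \<open>auto simp: D_def const_op_def\<close>)
  moreover have "comp_op A_K 1 D (\<lambda>_. const_op A_K (Xs i)) = const_op A_K (Xs (Suc i))"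
    unfolding comp_op_def const_op_def
  proof (rule mk_op_cong)
    fix x assume x: "x \<in> tuples A_K 1"
    have "restrict (\<lambda>j. snd (mk_op A_K 1 (\<lambda>_. Xs i)) x) {..<fst D} = restrict (\<lambda>_. Xs i) {..<1}"
      using x by (simp add: snd_mk_op D_def)
    moreover have "restrict (\<lambda>_. Xs i) {..<1} \<in> tuples A_K 1" using Xs_A by (rule tuples_restrict)
    ultimately show "snd D (restrict (\<lambda>j. snd (mk_op A_K 1 (\<lambda>_. Xs i)) x) {..<fst D}) = Xs (Suc i)"
      by (simp add: D_def snd_mk_op)
  qed
  ultimately show ?case by simp
qed

lemma KC_modal: "modal_clone (KC T)"
  unfolding modal_clone_def
proof
  show "is_clone A_K (KC T)" by (rule KC_clone)
  show "KC T \<subseteq> gen_clone A_K LT_ops"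
    unfolding KC_def
  proof (rule gen_clone_least[OF LT_clone])
    show "(\<lambda>i. const_op A_K (Xs i)) ` T \<subseteq> gen_clone A_K LT_ops"
    proof (rule image_subsetI)
      fix i show "const_op A_K (Xs i) \<in> gen_clone A_K LT_ops" by (rule Xs_LT)
    qed
  qed
qed

lemma KC_sub: "KC T \<subseteq> cconst A_K (Xs ` T)"
  unfolding KC_def
proof (rule gen_clone_least)
  have "Xs ` T \<subseteq> A_K" using Xs_A by (rule image_subsetI)
  then show "is_clone A_K (cconst A_K (Xs ` T))" by (rule cconst_clone)
  show "(\<lambda>i. const_op A_K (Xs i)) ` T \<subseteq> cconst A_K (Xs ` T)"
  proof (rule image_subsetI)
    fix i assume "i \<in> T"
    then have "Xs i \<in> Xs ` T" by (rule imageI)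
    then show "const_op A_K (Xs i) \<in> cconst A_K (Xs ` T)"
      unfolding const_op_def by (intro cconst_constI) simp_all
  qed
qed

lemma KC_gen: "j \<in> T \<Longrightarrow> const_op A_K (Xs j) \<in> KC T"
proof -
  assume "j \<in> T"
  then have "const_op A_K (Xs j) \<in> (\<lambda>i. const_op A_K (Xs i)) ` T" by (rule imageI)
  then show ?thesis unfolding KC_def using gen_clone_sub[of "(\<lambda>i. const_op A_K (Xs i)) ` T" A_K] by (rule subsetD[rotated])
qed

lemma const_cconst_Xs:
  assumes "const_op A_K (Xs j) \<in> cconst A_K V" shows "Xs j \<in> V"
proof (rule const_in_cconst)
  show "Xs j \<in> A_K" "Xs (if j = 0 then 1 else 0) \<in> A_K" by (rule Xs_A)+
  show "Xs (if j = 0 then 1 else 0) \<noteq> Xs j"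
  proof
    assume "Xs (if j = 0 then 1 else 0) = Xs j"
    then have "(if j = 0 then 1 else 0) = j" by (rule injD[OF Xs_inj])
    then show False by (cases "j = 0") auto
  qed
  show "mk_op A_K 1 (\<lambda>_. Xs j) \<in> cconst A_K V" using assms by (simp add: const_op_def)
qed

lemma KC_le: "KC T \<subseteq> KC U \<Longrightarrow> T \<subseteq> U"
proof
  fix j assume h: "KC T \<subseteq> KC U" and j: "j \<in> T"
  have "const_op A_K (Xs j) \<in> KC T" using j by (rule KC_gen)
  then have "const_op A_K (Xs j) \<in> KC U" using h by blast
  then have "const_op A_K (Xs j) \<in> cconst A_K (Xs ` U)" using KC_sub by blast
  then have "Xs j \<in> Xs ` U" by (rule const_cconst_Xs)
  then show "j \<in> U" by (simp add: inj_image_mem_iff[OF Xs_inj])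
qed

definition enc :: "nat set \<Rightarrow> nat set" where
  "enc X = (\<lambda>i. 2*i) ` X \<union> (\<lambda>i. 2*i+1) ` (- X)"

lemma even_ne_odd: "(2::nat) * i \<noteq> 2 * j + 1"
  by presburger

lemma enc_even: "2*i \<in> enc Y \<Longrightarrow> i \<in> Y"
proof -
  assume "2*i \<in> enc Y"
  then consider j where "j \<in> Y" "2*i = 2*j" | j where "2*i = 2*j+1"
    unfolding enc_def by blast
  then show ?thesis
  proof cases
    case 1 then show ?thesis by simp
  next
    case 2 then show ?thesis using even_ne_odd by blast
  qed
qed

lemma enc_odd: "2*i+1 \<in> enc Y \<Longrightarrow> i \<notin> Y"
proof -
  assume "2*i+1 \<in> enc Y"
  then consider j where "2*i+1 = 2*j" | j where "j \<notin> Y" "2*i+1 = 2*j+1"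
    unfolding enc_def by blast
  then show ?thesis
  proof cases
    case 1 then show ?thesis using even_ne_odd by metis
  next
    case 2 then show ?thesis by simp
  qed
qed

lemma enc_le: "enc X \<subseteq> enc Y \<Longrightarrow> X = Y"
proof -
  assume h: "enc X \<subseteq> enc Y"
  have "i \<in> Y" if "i \<in> X" for i
  proof -
    have "2*i \<in> enc X" using that unfolding enc_def by blast
    then show ?thesis using h enc_even by blast
  qed
  moreover have "i \<in> X" if "i \<in> Y" for i
  proof (rule ccontr)
    assume "i \<notin> X"
    then have "2*i+1 \<in> enc X" unfolding enc_def by blast
    then have "2*i+1 \<in> enc Y" using h by blast
    then show False using that enc_odd by blast
  qed
  ultimately show "X = Y" by blast
qed

lemma KC_enc_le: "KC (enc X) \<subseteq> KC (enc Y) \<Longrightarrow> X = Y"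
proof -
  assume "KC (enc X) \<subseteq> KC (enc Y)"
  then have "enc X \<subseteq> enc Y" by (rule KC_le)
  then show "X = Y" by (rule enc_le)
qed

lemma part1: "\<exists>S. S \<approx> (UNIV :: nat set set)
            \<and> (\<forall>C\<in>S. modal_clone C)
            \<and> (\<forall>C\<in>S. \<forall>D\<in>S. C \<subseteq> D \<longrightarrow> C = D)"
proof (intro exI conjI)
  let ?f = "\<lambda>X. KC (enc X)"
  have inj: "inj ?f"
  proof (rule injI)
    fix X Y assume "KC (enc X) = KC (enc Y)"
    then have "KC (enc X) \<subseteq> KC (enc Y)" by simp
    then show "X = Y" by (rule KC_enc_le)
  qed
  then show "range ?f \<approx> (UNIV :: nat set set)" by (rule inj_on_image_eqpoll_self)
  show "\<forall>C\<in>range ?f. modal_clone C"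
  proof
    fix C assume "C \<in> range ?f"
    then obtain X where "C = KC (enc X)" by blast
    then show "modal_clone C" using KC_modal by simp
  qed
  show "\<forall>C\<in>range ?f. \<forall>D\<in>range ?f. C \<subseteq> D \<longrightarrow> C = D"
  proof (intro ballI impI)
    fix C D assume "C \<in> range ?f" "D \<in> range ?f" and le: "C \<subseteq> D"
    then obtain X Y where XY: "C = KC (enc X)" "D = KC (enc Y)" by blast
    then have "X = Y" using le KC_enc_le by simp
    then show "C = D" using XY by simp
  qed
qed

definition pick :: "form set op \<Rightarrow> form set" where
  "pick f = snd f (restrict (\<lambda>_. Xs 0) {..<fst f})"

lemma part2: "\<exists>C. modal_clone C \<and> \<not> finitely_generated A_K C"
proof (intro exI conjI)
  show "modal_clone (KC UNIV)" by (rule KC_modal)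
  show "\<not> finitely_generated A_K (KC UNIV)"
  proof
    assume "finitely_generated A_K (KC UNIV)"
    then obtain F where F: "finite F" "F \<subseteq> ops A_K" "KC UNIV = gen_clone A_K F"
      unfolding finitely_generated_def by blast
    have V: "pick ` F \<subseteq> A_K"
    proof
      fix c assume "c \<in> pick ` F"
      then obtain f where f: "f \<in> F" "c = pick f" by blast
      have "restrict (\<lambda>_. Xs 0) {..<fst f} \<in> tuples A_K (fst f)" using Xs_A by (rule tuples_restrict)
      then show "c \<in> A_K" using f F(2) ops_val unfolding pick_def by blast
    qed
    have "F \<subseteq> cconst A_K (pick ` F)"
    proof
      fix f assume f: "f \<in> F"
      then have "f \<in> cconst A_K (range Xs)" using F(3) gen_clone_sub[of F A_K] KC_sub[of UNIV] by blast
      then consider n i where "f = proj A_K n i" "1 \<le> n" "i < n"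
        | n c where "f = mk_op A_K n (\<lambda>_. c)" "1 \<le> n"
        unfolding cconst_def by blast
      then show "f \<in> cconst A_K (pick ` F)"
      proof cases
        case 1 then show ?thesis unfolding cconst_def by blast
      next
        case 2
        have "restrict (\<lambda>_. Xs 0) {..<n} \<in> tuples A_K n" using Xs_A by (rule tuples_restrict)
        then have "pick f = c" unfolding pick_def using 2 by (simp add: snd_mk_op)
        then show ?thesis using 2 f unfolding cconst_def by blast
      qed
    qed
    then have "KC UNIV \<subseteq> cconst A_K (pick ` F)"
      using F(3) gen_clone_least cconst_clone[OF V] by metis
    then have "range Xs \<subseteq> pick ` F" using KC_gen const_cconst_Xs by blast
    then have "finite (range Xs)" using F(1) finite_subset by blast
    then show False using Xs_inj finite_imageD by blast
  qed
qed

theorem fact4p6: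
  shows "(\<exists>S. S \<approx> (UNIV :: nat set set)
            \<and> (\<forall>C\<in>S. modal_clone C)
            \<and> (\<forall>C\<in>S. \<forall>D\<in>S. C \<subseteq> D \<longrightarrow> C = D))
         \<and> (\<exists>C. modal_clone C \<and> \<not> finitely_generated A_K C)"
  using part1 part2 by blast

end
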